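(* Let $n\in\mathbb{Z}^+$, $p\geq 1$ and $t\in(1,2]$. Then $$\Gamma_{t^n}(K_n^{p*})\leq \Big(\frac{n}{n+k(n,t)}\Big)^{1/p}\leq \Big(\frac{n}{n+\lfloor a(t)n\rfloor}\Big)^{1/p},$$ $$\Gamma_{t^n}(K_n^{p})\leq \Big(\frac{n}{n+l(n,t)}\Big)^{1/p}\leq \Big(\frac{n}{n+\lfloor b(t)n\rfloor}\Big)^{1/p}.$$
   Context: For a compact convex set $K\subseteq\mathbb{R}^n$ and $m\in\mathbb{Z}^+$, the covering functional is $\Gamma_m(K)=\inf\{\gamma>0:\exists C\subseteq\mathbb{R}^n,\ |C|=m,\ K\subseteq C+\gamma K\}$; for a real number $x\geq1$, $\Gamma_x(K)$ means $\Gamma_{\lfloor x\rfloor}(K)$. $K_n^p=\{(x_1,\dots,x_n)\in\mathbb{R}^n:\sum_{i=1}^n|x_i|^p\leq1\}$ and $K_n^{p*}=\{(x_1,\dots,x_n)\in\mathbb{R}^n:\sum_{i=1}^n x_i^p\leq1,\ x_i\geq0\ \forall i\}$. Let $f(x)=\frac{(1+x)^{1+x}}{x^x}$, $g(x)=\frac{2^x(1+x)^{1+x}}{x^x}$ on $(0,\infty)$ (strictly increasing, tending to $1$ as $x\to0^+$); for $t>1$, $a(t)$ and $b(t)$ are the solutions of $f(x)=t$ and $g(x)=t$. For $t\in(1,2]$, $k(n,t)$ is the nonnegative integer with $\binom{n+k(n,t)}{n}\leq t^n<\binom{n+k(n,t)+1}{n}$ and $l(n,t)$ is the nonnegative integer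 with $2^{l(n,t)}\binom{n+l(n,t)}{n}\leq t^n<2^{l(n,t)+1}\binom{n+l(n,t)+1}{n}$. *)

theory Defs
  imports "HOL-Analysis.Analysis"
begin

definition covering_functional :: "nat \<Rightarrow> (real^'n) set \<Rightarrow> real" where
  "covering_functional m K =
     Inf {\<gamma>::real. \<gamma> > 0 \<and> (\<exists>C. finite C \<and> card C = m \<and>
            K \<subseteq> {c + \<gamma> *\<^sub>R x | c x. c \<in> C \<and> x \<in> K})}"

definition covering_functional_real :: "real \<Rightarrow> (real^'n) set \<Rightarrow> real" where
  "covering_functional_real x K = covering_functional (nat \<lfloor>x\<rfloor>) K"

definition lp_ball :: "real \<Rightarrow> (real^'n) set" where
  "lp_ball p = {x. (\<Sum>i\<in>UNIV. \<bar>x $ i\<bar> powr p) \<le> 1}"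

definition lp_simplex :: "real \<Rightarrow> (real^'n) set" where
  "lp_simplex p = {x. (\<Sum>i\<in>UNIV. (x $ i) powr p) \<le> 1 \<and> (\<forall>i. x $ i \<ge> 0)}"

definition ff :: "real \<Rightarrow> real" where
  "ff x = (1 + x) powr (1 + x) / x powr x"

definition gg :: "real \<Rightarrow> real" where
  "gg x = 2 powr x * (1 + x) powr (1 + x) / x powr x"

definition a_fun :: "real \<Rightarrow> real" where
  "a_fun t = (THE x. x > 0 \<and> ff x = t)"

definition b_fun :: "real \<Rightarrow> real" where
  "b_fun t = (THE x. x > 0 \<and> gg x = t)"

definition k_fun :: "nat \<Rightarrow> real \<Rightarrow> nat" where
  "k_fun n t = (THE k. real ((n + k) choose n) \<le> t ^ n \<and> t ^ n < real ((n + k + 1) choose n))"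

definition l_fun :: "nat \<Rightarrow> real \<Rightarrow> nat" where
  "l_fun n t = (THE l. 2 ^ l * real ((n + l) choose n) \<le> t ^ n \<and>
                       t ^ n < 2 ^ (l + 1) * real ((n + l + 1) choose n))"

end

theory Submission
  imports Defs "HOL-Real_Asymp.Real_Asymp"
begin

definition PW :: "'a set \<Rightarrow> nat \<Rightarrow> ('a \<Rightarrow> nat) set" where
  "PW I k = {w. (\<forall>i. i \<notin> I \<longrightarrow> w i = 0) \<and> sum w I \<le> k}"

lemma PW_count:
  assumes "finite I"
  shows "finite (PW I k) \<and> card (PW I k) \<le> (card I + k) choose card I"
  using assms
proof (induction I arbitrary: k rule: finite_induct)
  case empty
  have h: "PW {} k = {\<lambda>_. 0}" by (auto simp: PW_def)
  show ?case unfolding h by simp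
next
  case (insert j I)
  let ?S = "Sigma {0..k} (\<lambda>v. PW I (k - v))"
  have sub: "PW (insert j I) k \<subseteq> (\<lambda>(v,w). w(j:=v)) ` ?S"
  proof
    fix w assume w: "w \<in> PW (insert j I) k"
    have s: "sum w (insert j I) = w j + sum w I" using insert by simp
    have e: "sum (w(j:=0)) I = sum w I" using insert by (intro sum.cong) auto
    have "w(j:=0) \<in> PW I (k - w j)"
      using w insert s e unfolding PW_def by auto
    moreover have "w j \<in> {0..k}" using w s by (auto simp: PW_def)
    ultimately show "w \<in> (\<lambda>(v,w). w(j:=v)) ` ?S"
      by (intro image_eqI[of _ _ "(w j, w(j:=0))"]) auto
  qed
  have fS: "finite ?S" using insert by auto
  have "card (PW (insert j I) k) \<le> card ?S"
    by (rule order_trans[OF card_mono[OF finite_imageI[OF fS] sub] card_image_le[OF fS]])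
  also have "card ?S = (\<Sum>v=0..k. card (PW I (k - v)))"
    using insert by (simp add: card_SigmaI)
  also have "\<dots> \<le> (\<Sum>v=0..k. (card I + (k - v)) choose card I)"
    by (intro sum_mono) (use insert.IH in blast)
  also have "\<dots> = (\<Sum>u=0..k. (card I + u) choose card I)"
    by (subst sum.atLeastAtMost_rev) simp
  also have "\<dots> = (\<Sum>u\<le>k. (card I + u) choose u)"
    by (simp add: atLeast0AtMost binomial_symmetric[of "card I"])
  also have "\<dots> = Suc (card I + k) choose k" by (rule sum_choose_lower)
  also have "\<dots> = (card (insert j I) + k) choose card (insert j I)"
    using insert by (simp add: binomial_symmetric[of k "Suc (card I + k)"])
  finally show ?case using finite_subset[OF sub finite_imageI[OF fS]] by simp
qed

lemma sub_sum:
  fixes v :: "'a \<Rightarrow> nat"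
  assumes "finite I" "k \<le> sum v I"
  shows "\<exists>w. (\<forall>i. w i \<le> v i) \<and> sum w I = k"
  using assms
proof (induction I arbitrary: k rule: finite_induct)
  case empty then show ?case by (intro exI[of _ "\<lambda>_. 0"]) auto
next
  case (insert j I)
  show ?case
  proof (cases "k \<le> sum v I")
    case True
    then obtain w where w: "\<forall>i. w i \<le> v i" "sum w I = k" using insert.IH by blast
    have e: "sum (w(j:=0)) I = sum w I" using insert by (intro sum.cong) auto
    show ?thesis using w e insert by (intro exI[of _ "w(j:=0)"]) auto
  next
    case False
    have e: "sum (v(j:=k - sum v I)) I = sum v I" using insert by (intro sum.cong) auto
    show ?thesis using False e insert by (intro exI[of _ "v(j:=k - sum v I)"]) auto
  qed
qed

lemma comb:
  fixes y :: "'n::finite \<Rightarrow> real"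
  assumes "\<And>i. y i \<ge> 0" "sum y UNIV \<le> real (CARD('n) + k)"
  shows "\<exists>w::'n \<Rightarrow> nat. (\<forall>i. real (w i) \<le> y i) \<and> sum w UNIV \<le> k
           \<and> (\<Sum>i\<in>UNIV. y i - real (w i)) \<le> real CARD('n)"
proof -
  define v where "v i = nat \<lfloor>y i\<rfloor>" for i
  have vy: "real (v i) \<le> y i" for i using assms(1)[of i] by (simp add: v_def)
  have vy1: "y i - real (v i) \<le> 1" for i using assms(1)[of i] by (simp add: v_def) linarith
  show ?thesis
  proof (cases "sum v UNIV \<le> k")
    case True
    have "(\<Sum>i\<in>UNIV. y i - real (v i)) \<le> (\<Sum>i\<in>(UNIV::'n set). 1)"
      by (intro sum_mono vy1)
    then show ?thesis using True vy by (intro exI[of _ v]) auto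
  next
    case False
    then obtain w where w: "\<forall>i. w i \<le> v i" "sum w UNIV = k"
      using sub_sum[of UNIV k v] by auto
    have wy: "real (w i) \<le> y i" for i using w(1) vy[of i] by (meson of_nat_le_iff order_trans)
    have "(\<Sum>i\<in>UNIV. y i - real (w i)) = sum y UNIV - real (sum w UNIV)"
      by (simp add: sum_subtractf)
    also have "\<dots> \<le> real CARD('n)" using assms(2) w(2) by simp
    finally show ?thesis using w wy by (intro exI[of _ w]) auto
  qed
qed

lemma powr_le_self0:
  fixes x y :: real
  assumes "0 \<le> x" "x \<le> 1" "1 \<le> y"
  shows "x powr y \<le> x"
proof (cases "x = 0")
  case True then show ?thesis by simp
next
  case False then show ?thesis using assms powr_le_one_le by auto
qed

lemma superadd:
  fixes a b p :: real
  assumes "a \<ge> 0" "b \<ge> 0" "p \<ge> 1"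
  shows "a powr p + b powr p \<le> (a + b) powr p"
proof (cases "a + b = 0")
  case True
  hence "a = 0" "b = 0" using assms by auto
  then show ?thesis by simp
next
  case False
  hence s: "a + b > 0" using assms by auto
  have ha: "(a/(a+b)) powr p \<le> a/(a+b)"
    using assms s by (intro powr_le_self0) (auto simp: divide_simps)
  have hb: "(b/(a+b)) powr p \<le> b/(a+b)"
    using assms s by (intro powr_le_self0) (auto simp: divide_simps)
  have "a powr p + b powr p = (a+b) powr p * ((a/(a+b)) powr p + (b/(a+b)) powr p)"
    using assms s by (simp add: powr_divide distrib_left)
  also have "\<dots> \<le> (a+b) powr p * (a/(a+b) + b/(a+b))"
    using ha hb by (intro mult_left_mono) auto
  also have "\<dots> = (a+b) powr p" using s by (simp add: add_divide_distrib[symmetric])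
  finally show ?thesis .
qed

lemma core:
  fixes d :: "'n::finite \<Rightarrow> real" and p :: real and k :: nat
  assumes p: "p \<ge> 1" and d0: "\<And>i. d i \<ge> 0" and ds: "(\<Sum>i\<in>UNIV. d i powr p) \<le> 1"
  defines "N \<equiv> real (CARD('n) + k)"
  shows "\<exists>w. w \<in> PW (UNIV::'n set) k \<and> (\<forall>i. (w i / N) powr (1/p) \<le> d i)
          \<and> (\<Sum>i\<in>UNIV. (d i - (w i / N) powr (1/p)) powr p) \<le> real CARD('n) / N"
proof -
  have N0: "N > 0" unfolding N_def by (simp add: add_pos_nonneg)
  define y where "y i = N * d i powr p" for i
  have y0: "y i \<ge> 0" for i using N0 by (simp add: y_def)
  have "sum y UNIV = N * (\<Sum>i\<in>UNIV. d i powr p)" by (simp add: y_def sum_distrib_left)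
  also have "\<dots> \<le> N" using ds N0 by simp
  finally have ys: "sum y UNIV \<le> real (CARD('n) + k)" unfolding N_def .
  obtain w :: "'n \<Rightarrow> nat" where w: "\<forall>i. real (w i) \<le> y i" "sum w UNIV \<le> k"
    "(\<Sum>i\<in>UNIV. y i - real (w i)) \<le> real CARD('n)"
    using comb[OF y0 ys] by blast
  define r where "r i = (w i / N) powr (1/p)" for i
  have wle: "w i / N \<le> d i powr p" for i using w(1)[rule_format, of i] N0
    by (simp add: y_def divide_simps mult.commute)
  have rd: "r i \<le> d i" for i
  proof -
    have "r i \<le> (d i powr p) powr (1/p)" unfolding r_def
      using wle[of i] N0 p by (intro powr_mono2) auto
    also have "\<dots> = d i" using p d0[of i] by (simp add: powr_powr)
    finally show ?thesis .
  qed
  have r0: "r i \<ge> 0" for i by (simp add: r_def)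
  have rp: "r i powr p = w i / N" for i unfolding r_def using p N0 by (simp add: powr_powr)
  have each: "(d i - r i) powr p \<le> d i powr p - w i / N" for i
    using superadd[of "d i - r i" "r i" p] rd[of i] r0[of i] p rp[of i] by simp
  have "(\<Sum>i\<in>UNIV. (d i - r i) powr p) \<le> (\<Sum>i\<in>UNIV. d i powr p - w i / N)"
    by (intro sum_mono each)
  also have "\<dots> = (\<Sum>i\<in>UNIV. y i - real (w i)) / N"
    using N0 unfolding sum_divide_distrib by (intro sum.cong) (auto simp: y_def divide_simps)
  also have "\<dots> \<le> real CARD('n) / N" using w(3) N0 by (simp add: divide_right_mono)
  finally have "(\<Sum>i\<in>UNIV. (d i - r i) powr p) \<le> real CARD('n) / N" .
  moreover have "w \<in> PW UNIV k" using w(2) by (simp add: PW_def)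
  ultimately show ?thesis using rd unfolding r_def by blast
qed

lemma gamma_facts:
  fixes p :: real and k :: nat
  assumes p: "p \<ge> 1"
  defines "\<gamma> \<equiv> (real CARD('n::finite) / real (CARD('n) + k)) powr (1/p)"
  shows "\<gamma> > 0" "\<gamma> powr p = real CARD('n) / real (CARD('n) + k)"
proof -
  have c0: "real CARD('n) > 0" by simp
  have l: "real CARD('n) / real (CARD('n) + k) > 0" using c0 by (simp add: add_pos_nonneg)
  show "\<gamma> > 0" unfolding \<gamma>_def using l by (simp only: powr_gt_zero)
  show "\<gamma> powr p = real CARD('n) / real (CARD('n) + k)"
    unfolding \<gamma>_def using l p by (simp only: powr_powr) simp
qed

lemma simplex_cover:
  fixes p :: real and k :: nat
  assumes p: "p \<ge> 1"
  defines "\<gamma> \<equiv> (real CARD('n::finite) / real (CARD('n) + k)) powr (1/p)"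
  shows "\<exists>C0. finite C0 \<and> card C0 \<le> (CARD('n) + k) choose CARD('n) \<and>
    (lp_simplex p :: (real^'n) set) \<subseteq> {c + \<gamma> *\<^sub>R x | c x. c \<in> C0 \<and> x \<in> lp_simplex p}"
proof -
  define N where "N = real (CARD('n) + k)"
  have g0: "\<gamma> > 0" and gp: "\<gamma> powr p = real CARD('n) / N"
    using gamma_facts[OF p, of k] unfolding \<gamma>_def N_def by auto
  define cen :: "('n \<Rightarrow> nat) \<Rightarrow> real^'n" where "cen w = (\<chi> i. (w i / N) powr (1/p))" for w
  define C0 where "C0 = cen ` PW (UNIV::'n set) k"
  have PWc: "finite (PW (UNIV::'n set) k) \<and> card (PW (UNIV::'n set) k) \<le> (CARD('n) + k) choose CARD('n)"
    using PW_count[of "UNIV::'n set" k] by simp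
  have fin: "finite C0" unfolding C0_def using PWc by simp
  have cardC: "card C0 \<le> (CARD('n) + k) choose CARD('n)"
    unfolding C0_def using PWc card_image_le order_trans by blast
  have cov: "x \<in> {c + \<gamma> *\<^sub>R x | c x. c \<in> C0 \<and> x \<in> lp_simplex p}" if x: "x \<in> lp_simplex p" for x
  proof -
    have x0: "\<And>i. x $ i \<ge> 0" and xs: "(\<Sum>i\<in>UNIV. (x $ i) powr p) \<le> 1"
      using x by (auto simp: lp_simplex_def)
    obtain w where w: "w \<in> PW (UNIV::'n set) k" "\<forall>i. (w i / N) powr (1/p) \<le> x $ i"
      "(\<Sum>i\<in>UNIV. (x $ i - (w i / N) powr (1/p)) powr p) \<le> real CARD('n) / N"
      using core[OF p x0 xs, of k] unfolding N_def by blast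
    define c where "c = cen w"
    define u where "u = (1/\<gamma>) *\<^sub>R (x - c)"
    have xc: "x = c + \<gamma> *\<^sub>R u" using g0 by (simp add: u_def)
    have ui: "u $ i = (x $ i - (w i / N) powr (1/p)) / \<gamma>" for i
      by (simp add: u_def c_def cen_def)
    have u0: "u $ i \<ge> 0" for i using w(2) g0 by (simp add: ui)
    have "(\<Sum>i\<in>UNIV. (u $ i) powr p) = (\<Sum>i\<in>UNIV. (x $ i - (w i / N) powr (1/p)) powr p) / \<gamma> powr p"
      unfolding sum_divide_distrib using w(2) g0 by (intro sum.cong) (auto simp: ui powr_divide)
    also have "\<dots> \<le> 1"
    proof -
      have gpos: "\<gamma> powr p > 0" using g0 by simp
      have "(\<Sum>i\<in>UNIV. (x $ i - (w i / N) powr (1/p)) powr p) \<le> \<gamma> powr p" using w(3) gp by simp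
      then show ?thesis using gpos by (simp add: divide_le_eq_1)
    qed
    finally have "u \<in> lp_simplex p" using u0 by (simp add: lp_simplex_def)
    moreover have "c \<in> C0" unfolding C0_def c_def using w(1) by simp
    ultimately show ?thesis using xc by blast
  qed
  show ?thesis using fin cardC cov by blast
qed

lemma ball_cover:
  fixes p :: real and k :: nat
  assumes p: "p \<ge> 1"
  defines "\<gamma> \<equiv> (real CARD('n::finite) / real (CARD('n) + k)) powr (1/p)"
  shows "\<exists>C0. finite C0 \<and> card C0 \<le> 2 ^ k * ((CARD('n) + k) choose CARD('n)) \<and>
    (lp_ball p :: (real^'n) set) \<subseteq> {c + \<gamma> *\<^sub>R x | c x. c \<in> C0 \<and> x \<in> lp_ball p}"
proof -
  define N where "N = real (CARD('n) + k)"
  have g0: "\<gamma> > 0" and gp: "\<gamma> powr p = real CARD('n) / N"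
    using gamma_facts[OF p, of k] unfolding \<gamma>_def N_def by auto
  define cen :: "('n \<Rightarrow> nat) \<times> 'n set \<Rightarrow> real^'n" where
    "cen = (\<lambda>(w,S). (\<chi> i. (if i \<in> S then -1 else 1) * (w i / N) powr (1/p)))"
  define SS where "SS = Sigma (PW (UNIV::'n set) k) (\<lambda>w. Pow {i. w i \<noteq> 0})"
  define C0 where "C0 = cen ` SS"
  have PWc: "finite (PW (UNIV::'n set) k) \<and> card (PW (UNIV::'n set) k) \<le> (CARD('n) + k) choose CARD('n)"
    using PW_count[of "UNIV::'n set" k] by simp
  have finSS: "finite SS" unfolding SS_def using PWc by auto
  have fin: "finite C0" unfolding C0_def using finSS by simp
  have supp: "card {i. w i \<noteq> 0} \<le> k" if "w \<in> PW (UNIV::'n set) k" for w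
  proof -
    have "card {i. w i \<noteq> 0} = (\<Sum>i\<in>{i. w i \<noteq> 0}. 1)" by simp
    also have "\<dots> \<le> (\<Sum>i\<in>{i. w i \<noteq> 0}. w i)" by (intro sum_mono) auto
    also have "\<dots> \<le> sum w UNIV" by (intro sum_mono2) auto
    also have "\<dots> \<le> k" using that by (simp add: PW_def)
    finally show ?thesis .
  qed
  have "card SS = (\<Sum>w\<in>PW (UNIV::'n set) k. 2 ^ card {i. w i \<noteq> 0})"
    unfolding SS_def using PWc by (simp add: card_SigmaI card_Pow)
  also have "\<dots> \<le> (\<Sum>w\<in>PW (UNIV::'n set) k. 2 ^ k)"
    by (intro sum_mono power_increasing supp) auto
  also have "\<dots> = 2 ^ k * card (PW (UNIV::'n set) k)" by simp
  also have "\<dots> \<le> 2 ^ k * ((CARD('n) + k) choose CARD('n))" using PWc by simp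
  finally have "card SS \<le> 2 ^ k * ((CARD('n) + k) choose CARD('n))" .
  hence cardC: "card C0 \<le> 2 ^ k * ((CARD('n) + k) choose CARD('n))"
    unfolding C0_def using card_image_le[OF finSS, of cen] by linarith
  have cov: "x \<in> {c + \<gamma> *\<^sub>R x | c x. c \<in> C0 \<and> x \<in> lp_ball p}" if x: "x \<in> lp_ball p" for x
  proof -
    have x0: "\<And>i. \<bar>x $ i\<bar> \<ge> 0" and xs: "(\<Sum>i\<in>UNIV. \<bar>x $ i\<bar> powr p) \<le> 1"
      using x by (auto simp: lp_ball_def)
    obtain w where w: "w \<in> PW (UNIV::'n set) k" "\<forall>i. (w i / N) powr (1/p) \<le> \<bar>x $ i\<bar>"
      "(\<Sum>i\<in>UNIV. (\<bar>x $ i\<bar> - (w i / N) powr (1/p)) powr p) \<le> real CARD('n) / N"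
      using core[OF p x0 xs, of k] unfolding N_def by blast
    define S where "S = {i. x $ i < 0 \<and> w i \<noteq> 0}"
    define c where "c = cen (w, S)"
    define u where "u = (1/\<gamma>) *\<^sub>R (x - c)"
    have xc: "x = c + \<gamma> *\<^sub>R u" using g0 by (simp add: u_def)
    have ci: "c $ i = (if x $ i < 0 then -1 else 1) * (w i / N) powr (1/p)" for i
      by (cases "w i = 0") (auto simp: c_def cen_def S_def)
    have di: "\<bar>x $ i - c $ i\<bar> = \<bar>x $ i\<bar> - (w i / N) powr (1/p)" for i
      using w(2)[rule_format, of i] by (auto simp: ci)
    have ui: "\<bar>u $ i\<bar> = (\<bar>x $ i\<bar> - (w i / N) powr (1/p)) / \<gamma>" for i
      using g0 by (simp add: u_def di[symmetric] abs_mult)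
    have "(\<Sum>i\<in>UNIV. \<bar>u $ i\<bar> powr p) = (\<Sum>i\<in>UNIV. (\<bar>x $ i\<bar> - (w i / N) powr (1/p)) powr p) / \<gamma> powr p"
      unfolding sum_divide_distrib using w(2) g0 by (intro sum.cong) (auto simp: ui powr_divide)
    also have "\<dots> \<le> 1"
    proof -
      have gpos: "\<gamma> powr p > 0" using g0 by simp
      have "(\<Sum>i\<in>UNIV. (\<bar>x $ i\<bar> - (w i / N) powr (1/p)) powr p) \<le> \<gamma> powr p" using w(3) gp by simp
      then show ?thesis using gpos by (simp add: divide_le_eq_1)
    qed
    finally have "u \<in> lp_ball p" by (simp add: lp_ball_def)
    moreover have "c \<in> C0" unfolding C0_def c_def SS_def using w(1) by (auto simp: S_def)
    ultimately show ?thesis using xc by blast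
  qed
  show ?thesis using fin cardC cov by blast
qed

lemma cf_le:
  fixes K :: "(real^'n::finite) set" and \<gamma> :: real
  assumes g: "\<gamma> > 0" and fin: "finite C0" and cm: "card C0 \<le> m"
    and cov: "K \<subseteq> {c + \<gamma> *\<^sub>R x | c x. c \<in> C0 \<and> x \<in> K}"
  shows "covering_functional m K \<le> \<gamma>"
proof -
  have "inj (\<lambda>r::real. (\<chi> i. r) :: real^'n)"
    by (rule injI) (simp add: vec_eq_iff)
  hence "infinite (range (\<lambda>r::real. (\<chi> i. r) :: real^'n))"
    using finite_imageD[of "\<lambda>r::real. (\<chi> i. r) :: real^'n" UNIV] infinite_UNIV_char_0 by auto
  hence "infinite (UNIV :: (real^'n) set)" using infinite_super subset_UNIV by metis
  hence "infinite (UNIV - C0)" using fin by simp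
  then obtain D where D: "finite D" "card D = m - card C0" "D \<subseteq> UNIV - C0"
    using infinite_arbitrarily_large by blast
  define C where "C = C0 \<union> D"
  have fC: "finite C" using fin D by (simp add: C_def)
  have dj: "C0 \<inter> D = {}" using D by blast
  have cC: "card C = m" unfolding C_def using card_Un_disjoint[OF fin D(1) dj] D cm by simp
  have covC: "K \<subseteq> {c + \<gamma> *\<^sub>R x | c x. c \<in> C \<and> x \<in> K}"
  proof
    fix y assume "y \<in> K"
    then obtain c x where "y = c + \<gamma> *\<^sub>R x" "c \<in> C0" "x \<in> K" using cov by blast
    thus "y \<in> {c + \<gamma> *\<^sub>R x | c x. c \<in> C \<and> x \<in> K}" unfolding C_def by blast
  qed
  define S where "S = {\<gamma>::real. \<gamma> > 0 \<and> (\<exists>C. finite C \<and> card C = m \<and>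
            K \<subseteq> {c + \<gamma> *\<^sub>R x | c x. c \<in> C \<and> x \<in> K})}"
  have mem: "\<gamma> \<in> S"
    unfolding S_def mem_Collect_eq using g fC cC covC by (intro conjI exI[of _ C]) auto
  have bd: "bdd_below S"
    by (rule bdd_belowI[of _ 0]) (simp add: S_def)
  have "Inf S \<le> \<gamma>" by (rule cInf_lower[OF mem bd])
  thus ?thesis unfolding covering_functional_def S_def .
qed

lemma the_step:
  fixes h :: "nat \<Rightarrow> real"
  assumes mono: "mono h" and h0: "h 0 \<le> T" and hM: "T < h M"
  defines "K \<equiv> (THE k. h k \<le> T \<and> T < h (Suc k))"
  shows "h K \<le> T \<and> T < h (Suc K)" "h m \<le> T \<Longrightarrow> m \<le> K"
proof -
  define j where "j = (LEAST j. T < h j)"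
  have j1: "T < h j" unfolding j_def using hM by (rule LeastI)
  have jpos: "j > 0" using j1 h0 by (cases j) auto
  have j2: "h (j - 1) \<le> T" using not_less_Least[of "j - 1" "\<lambda>j. T < h j"] jpos unfolding j_def[symmetric]
    by linarith
  have uniq: "k1 = k2" if "h k1 \<le> T \<and> T < h (Suc k1)" "h k2 \<le> T \<and> T < h (Suc k2)" for k1 k2
  proof (rule ccontr)
    assume "k1 \<noteq> k2"
    hence "Suc k1 \<le> k2 \<or> Suc k2 \<le> k1" by auto
    thus False
    proof
      assume "Suc k1 \<le> k2"
      hence "h (Suc k1) \<le> h k2" using monoD[OF mono] by blast
      thus False using that by linarith
    next
      assume "Suc k2 \<le> k1"
      hence "h (Suc k2) \<le> h k1" using monoD[OF mono] by blast
      thus False using that by linarith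
    qed
  qed
  have ex: "h (j-1) \<le> T \<and> T < h (Suc (j-1))" using j1 j2 jpos by simp
  have "h K \<le> T \<and> T < h (Suc K)" unfolding K_def
    by (rule theI[of _ "j - 1"]) (use ex uniq in blast)+
  thus "h K \<le> T \<and> T < h (Suc K)" .
  assume hm: "h m \<le> T"
  show "m \<le> K"
  proof (rule ccontr)
    assume "\<not> m \<le> K"
    hence "Suc K \<le> m" by simp
    hence "h (Suc K) \<le> h m" using monoD[OF mono] by blast
    thus False using hm \<open>h K \<le> T \<and> T < h (Suc K)\<close> by linarith
  qed
qed

definition hf :: "real \<Rightarrow> real" where
  "hf x = (1 + x) * ln (1 + x) - x * ln x"

lemma ff_exp: "x > 0 \<Longrightarrow> ff x = exp (hf x)"
  by (simp add: ff_def hf_def powr_def exp_diff mult.commute)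

lemma gg_exp: "x > 0 \<Longrightarrow> gg x = exp (x * ln 2 + hf x)"
  by (simp add: gg_def hf_def powr_def exp_diff exp_add mult.commute)

lemma hf_deriv: "x > 0 \<Longrightarrow> (hf has_real_derivative (ln (1 + x) - ln x)) (at x)"
  unfolding hf_def
  by (auto intro!: derivative_eq_intros simp: field_simps)

lemma hf_strict: "0 < x \<Longrightarrow> x < y \<Longrightarrow> hf x < hf y"
proof -
  assume xy: "0 < x" "x < y"
  show "hf x < hf y"
  proof (rule DERIV_pos_imp_increasing[OF xy(2)])
    fix z assume "x \<le> z" "z \<le> y"
    hence z: "z > 0" using xy by simp
    have "ln z < ln (1 + z)" using z by simp
    thus "\<exists>d. (hf has_real_derivative d) (at z) \<and> d > 0" using hf_deriv[OF z] by auto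
  qed
qed

lemma hf_mono: "0 < x \<Longrightarrow> x \<le> y \<Longrightarrow> hf x \<le> hf y"
  using hf_strict[of x y] by (cases "x = y") auto

lemma hf_cont: "0 < a \<Longrightarrow> continuous_on {a..b} hf"
  unfolding hf_def by (intro continuous_intros) auto

lemma hf_big: "x > 0 \<Longrightarrow> hf x > ln x"
proof -
  assume x: "x > 0"
  have l: "ln x < ln (1 + x)" using x by simp
  have "hf x = ln (1 + x) + x * (ln (1 + x) - ln x)" by (simp add: hf_def algebra_simps)
  also have "\<dots> \<ge> ln (1 + x)" using l x by simp
  finally show ?thesis using l by linarith
qed

lemma solve_gen:
  fixes F G :: "real \<Rightarrow> real" and t :: real
  assumes FG: "\<And>x. x > 0 \<Longrightarrow> F x = exp (G x)"
    and Gs: "\<And>x y. 0 < x \<Longrightarrow> x < y \<Longrightarrow> G x < G y"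
    and Gc: "\<And>a b. 0 < a \<Longrightarrow> continuous_on {a..b} G"
    and lim: "(F \<longlongrightarrow> 1) (at_right 0)"
    and t: "t > 1" and Gt: "G t > ln t"
  shows "\<exists>!x. x > 0 \<and> F x = t"
proof -
  have "eventually (\<lambda>x. F x < t) (at_right 0)"
    using t by (intro order_tendstoD(2)[OF lim]) auto
  then obtain b where b: "b > 0" "\<And>y. y > 0 \<Longrightarrow> y < b \<Longrightarrow> F y < t"
    unfolding eventually_at_right_field by auto
  define e where "e = min b t / 2"
  have e: "e > 0" "e < b" "e < t" using b t by (auto simp: e_def)
  have "F e < t" using b(2) e by simp
  hence he: "G e < ln t" using FG[of e] e t
    by (metis exp_less_cancel_iff exp_ln less_trans zero_less_one)
  obtain x where x: "e \<le> x" "x \<le> t" "G x = ln t"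
    using IVT'[of G e "ln t" t] he Gt e Gc[of e t] by auto
  have x0: "x > 0" using x e by simp
  show "\<exists>!x. x > 0 \<and> F x = t"
  proof (rule ex1I[of _ x])
    show "x > 0 \<and> F x = t" using x0 x t FG[of x] by simp
    fix y assume y: "y > 0 \<and> F y = t"
    hence "G y = ln t" using FG[of y] by (metis ln_exp)
    thus "y = x" using Gs[of x y] Gs[of y x] x0 y x(3)
      by (metis linorder_neqE_linordered_idom less_irrefl)
  qed
qed

lemma a_fun_facts:
  assumes t: "t > 1"
  shows "a_fun t > 0 \<and> hf (a_fun t) = ln t"
proof -
  have lim: "(ff \<longlongrightarrow> 1) (at_right 0)"
    unfolding ff_def by real_asymp
  have ex1: "\<exists>!x. x > 0 \<and> ff x = t"
    by (rule solve_gen[OF ff_exp hf_strict hf_cont lim t]) (use hf_big[of t] t in auto)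
  have "a_fun t > 0 \<and> ff (a_fun t) = t" unfolding a_fun_def using theI'[OF ex1] .
  thus ?thesis using ff_exp[of "a_fun t"] by (metis ln_exp)
qed

lemma b_fun_facts:
  assumes t: "t > 1"
  shows "b_fun t > 0 \<and> b_fun t * ln 2 + hf (b_fun t) = ln t"
proof -
  have lim: "(gg \<longlongrightarrow> 1) (at_right 0)"
    unfolding gg_def by real_asymp
  have Gs: "x * ln 2 + hf x < y * ln 2 + hf y" if "0 < x" "x < y" for x y :: real
    using hf_strict[OF that] that by (simp add: add_less_le_mono)
  have Gc: "continuous_on {a..b} (\<lambda>x. x * ln 2 + hf x)" if "0 < a" for a b :: real
    using hf_cont[OF that, of b] by (intro continuous_intros) auto
  have "t * ln 2 > 0" using t by simp
  hence Gt: "t * ln 2 + hf t > ln t" using hf_big[of t] t by linarith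
  have ex1: "\<exists>!x. x > 0 \<and> gg x = t"
    by (rule solve_gen[OF gg_exp Gs Gc lim t Gt])
  have "b_fun t > 0 \<and> gg (b_fun t) = t" unfolding b_fun_def using theI'[OF ex1] .
  thus ?thesis using gg_exp[of "b_fun t"] by (metis ln_exp)
qed

lemma binom_ln:
  fixes n m :: nat
  assumes n: "n \<ge> 1" and m: "m \<ge> 1"
  shows "ln (real ((n + m) choose n)) \<le> real n * hf (real m / real n)"
proof -
  define B where "B = (n + m) choose n"
  have Bm: "B = (n + m) choose m" unfolding B_def using binomial_symmetric[of m "n+m"] by simp
  have "(m + n) ^ (n + m) = (\<Sum>j\<le>n+m. ((n+m) choose j) * m ^ j * n ^ (n + m - j))"
    using binomial_ring[of m n "n+m"] by simp
  moreover have "((n+m) choose m) * m ^ m * n ^ (n + m - m) \<le> (\<Sum>j\<le>n+m. ((n+m) choose j) * m ^ j * n ^ (n + m - j))"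
    by (rule member_le_sum[of m "{..n+m}" "\<lambda>j. ((n+m) choose j) * m ^ j * n ^ (n + m - j)"]) auto
  ultimately have natb: "B * m ^ m * n ^ n \<le> (n + m) ^ (n + m)" by (simp add: Bm add.commute)
  hence rb: "real B * real m ^ m * real n ^ n \<le> real (n + m) ^ (n + m)"
    by (metis of_nat_le_iff of_nat_mult of_nat_power)
  have B0: "B > 0" unfolding B_def by simp
  have m0: "real m > 0" and n0: "real n > 0" using m n by auto
  have "ln (real B * real m ^ m * real n ^ n) \<le> ln (real (n + m) ^ (n + m))"
    using rb B0 m0 n0 by (subst ln_le_cancel_iff) auto
  hence l1: "ln (real B) + real m * ln (real m) + real n * ln (real n) \<le> real (n + m) * ln (real (n + m))"
    using B0 m0 n0 by (simp add: ln_mult ln_realpow)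
  have e1: "1 + real m / real n = real (n + m) / real n" using n0 by (simp add: field_simps)
  have h: "hf (real m / real n) = (real (n + m) / real n) * (ln (real (n + m)) - ln (real n))
        - (real m / real n) * (ln (real m) - ln (real n))"
    unfolding hf_def e1 using m0 n0 by (simp add: ln_div)
  have "real n * hf (real m / real n)
      = real (n + m) * (ln (real (n + m)) - ln (real n)) - real m * (ln (real m) - ln (real n))"
    unfolding h using n0 by (simp add: right_diff_distrib)
  also have "\<dots> = real (n + m) * ln (real (n + m)) - real n * ln (real n) - real m * ln (real m)"
    by (simp add: algebra_simps)
  finally show ?thesis using l1 unfolding B_def by linarith
qed

theorem proposition3p3:
  fixes p t :: real
  defines "n \<equiv> CARD('n::finite)"
  assumes "p \<ge> 1" and "1 < t" and "t \<le> 2"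
  shows "covering_functional_real (t ^ n) (lp_simplex p :: (real^'n) set)
           \<le> (real n / real (n + k_fun n t)) powr (1 / p)
       \<and> (real n / real (n + k_fun n t)) powr (1 / p)
           \<le> (real n / (real n + of_int \<lfloor>a_fun t * real n\<rfloor>)) powr (1 / p)
       \<and> covering_functional_real (t ^ n) (lp_ball p :: (real^'n) set)
           \<le> (real n / real (n + l_fun n t)) powr (1 / p)
       \<and> (real n / real (n + l_fun n t)) powr (1 / p)
           \<le> (real n / (real n + of_int \<lfloor>b_fun t * real n\<rfloor>)) powr (1 / p)"
proof -
  note p = assms(2) and t = assms(3)
  have n1: "n \<ge> 1" unfolding n_def by (simp add: Suc_le_eq)
  have n0: "real n > 0" using n1 by simp
  define T where "T = t ^ n"
  have T1: "1 \<le> T" unfolding T_def using t by simp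
  have lnT: "ln T = real n * ln t" unfolding T_def using t by (simp add: ln_realpow)
  define hk where "hk k = real ((n + k) choose n)" for k
  define hl where "hl k = 2 ^ k * real ((n + k) choose n)" for k :: nat
  have monok: "mono hk" unfolding hk_def
    by (rule incseq_SucI) (simp add: binomial_right_mono)
  have monol: "mono hl" unfolding hl_def
  proof (rule incseq_SucI)
    fix k :: nat
    have "real ((n + k) choose n) \<le> real ((n + Suc k) choose n)" by (simp add: binomial_right_mono)
    moreover have "(2::real) ^ k \<le> 2 ^ Suc k" by simp
    ultimately show "2 ^ k * real ((n + k) choose n) \<le> 2 ^ Suc k * real ((n + Suc k) choose n)"
      by (intro mult_mono) auto
  qed
  define M where "M = nat \<lceil>T\<rceil>"
  have TM: "T < real (Suc M)" unfolding M_def by linarith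
  have "Suc M choose M \<le> (n + M) choose M" using n1 by (intro binomial_right_mono) simp
  hence "Suc M \<le> (n + M) choose n" using binomial_symmetric[of M "n + M"] by simp
  hence hkM: "T < hk M" unfolding hk_def using TM by (meson less_le_trans of_nat_le_iff)
  have "(1::real) \<le> real ((n + M) choose n)" by (simp add: Suc_le_eq)
  hence "(2::real) ^ M \<le> hl M" unfolding hl_def by simp
  moreover have "real (Suc M) \<le> (2::real) ^ M"
    by (metis Suc_leI less_exp of_nat_le_iff of_nat_numeral of_nat_power)
  ultimately have hlM: "T < hl M" using TM by linarith
  have kdef: "k_fun n t = (THE k. hk k \<le> T \<and> T < hk (Suc k))"
    by (simp add: k_fun_def hk_def T_def)
  have ldef: "l_fun n t = (THE k. hl k \<le> T \<and> T < hl (Suc k))"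
    by (simp add: l_fun_def hl_def T_def)
  note K = the_step[OF monok _ hkM, folded kdef]
  note L = the_step[OF monol _ hlM, folded ldef]
  have hk0: "hk 0 \<le> T" and hl0: "hl 0 \<le> T" using T1 by (auto simp: hk_def hl_def)
  obtain C0 where C0: "finite C0" "card C0 \<le> (n + k_fun n t) choose n"
    "(lp_simplex p :: (real^'n) set) \<subseteq> {c + ((real n / real (n + k_fun n t)) powr (1/p)) *\<^sub>R x | c x. c \<in> C0 \<and> x \<in> lp_simplex p}"
    using simplex_cover[OF p, of "k_fun n t", where 'n='n] unfolding n_def by blast
  have "real ((n + k_fun n t) choose n) \<le> T" using K(1)[OF hk0] by (simp add: hk_def)
  hence "card C0 \<le> nat \<lfloor>t ^ n\<rfloor>" using C0(2) le_nat_floor unfolding T_def by (meson order_trans)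
  hence P1: "covering_functional_real (t ^ n) (lp_simplex p :: (real^'n) set)
           \<le> (real n / real (n + k_fun n t)) powr (1 / p)"
    unfolding covering_functional_real_def
    using cf_le[OF _ C0(1) _ C0(3)] gamma_facts(1)[OF p, of "k_fun n t", where 'n='n] unfolding n_def by blast
  obtain D0 where D0: "finite D0" "card D0 \<le> 2 ^ l_fun n t * ((n + l_fun n t) choose n)"
    "(lp_ball p :: (real^'n) set) \<subseteq> {c + ((real n / real (n + l_fun n t)) powr (1/p)) *\<^sub>R x | c x. c \<in> D0 \<and> x \<in> lp_ball p}"
    using ball_cover[OF p, of "l_fun n t", where 'n='n] unfolding n_def by blast
  have "real (2 ^ l_fun n t * ((n + l_fun n t) choose n)) \<le> T" using L(1)[OF hl0] by (simp add: hl_def)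
  hence "card D0 \<le> nat \<lfloor>t ^ n\<rfloor>" using D0(2) le_nat_floor unfolding T_def by (meson order_trans)
  hence P3: "covering_functional_real (t ^ n) (lp_ball p :: (real^'n) set)
           \<le> (real n / real (n + l_fun n t)) powr (1 / p)"
    unfolding covering_functional_real_def
    using cf_le[OF _ D0(1) _ D0(3)] gamma_facts(1)[OF p, of "l_fun n t", where 'n='n] unfolding n_def by blast
  have bmono: "(real n / real (n + k)) powr (1 / p) \<le> (real n / (real n + real m)) powr (1 / p)"
    if "m \<le> k" for m k :: nat
  proof -
    have "real n / real (n + k) \<le> real n / (real n + real m)"
      using that n0 by (intro divide_left_mono) auto
    thus ?thesis using p n0 by (intro powr_mono2) auto
  qed
  have af: "a_fun t > 0 \<and> hf (a_fun t) = ln t" using a_fun_facts[OF t] .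
  define m where "m = nat \<lfloor>a_fun t * real n\<rfloor>"
  have mfl: "of_int \<lfloor>a_fun t * real n\<rfloor> = real m" unfolding m_def using af n0 by simp
  have mle: "real m \<le> a_fun t * real n" using mfl of_int_floor_le by metis
  have "hk m \<le> T"
  proof (cases "m = 0")
    case True then show ?thesis using hk0 by simp
  next
    case False
    hence m1: "m \<ge> 1" by simp
    have q: "real m / real n \<le> a_fun t" using mle n0 by (simp add: divide_simps)
    have "ln (hk m) \<le> real n * hf (real m / real n)" unfolding hk_def by (rule binom_ln[OF n1 m1])
    also have "\<dots> \<le> real n * hf (a_fun t)"
      using hf_mono[OF _ q] m1 n0 by (intro mult_left_mono) auto
    also have "\<dots> = ln T" using af lnT by simp
    finally show ?thesis using T1 by (simp add: hk_def ln_le_cancel_iff)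
  qed
  hence P2: "(real n / real (n + k_fun n t)) powr (1 / p)
           \<le> (real n / (real n + of_int \<lfloor>a_fun t * real n\<rfloor>)) powr (1 / p)"
    unfolding mfl using K(2) by (intro bmono) (use hk0 in blast)
  have bf: "b_fun t > 0 \<and> b_fun t * ln 2 + hf (b_fun t) = ln t" using b_fun_facts[OF t] .
  define m' where "m' = nat \<lfloor>b_fun t * real n\<rfloor>"
  have mfl': "of_int \<lfloor>b_fun t * real n\<rfloor> = real m'" unfolding m'_def using bf n0 by simp
  have mle': "real m' \<le> b_fun t * real n" using mfl' of_int_floor_le by metis
  have "hl m' \<le> T"
  proof (cases "m' = 0")
    case True then show ?thesis using hl0 by simp
  next
    case False
    hence m1: "m' \<ge> 1" by simp
    have q: "real m' / real n \<le> b_fun t" using mle' n0 by (simp add: divide_simps)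
    have B0: "real ((n + m') choose n) > 0" by simp
    have "ln (hl m') = real m' * ln 2 + ln (real ((n + m') choose n))"
      unfolding hl_def using B0 by (simp add: ln_mult ln_realpow)
    also have "\<dots> \<le> real m' * ln 2 + real n * hf (real m' / real n)"
      using binom_ln[OF n1 m1] by simp
    also have "\<dots> = real n * (real m' / real n * ln 2 + hf (real m' / real n))"
      using n0 by (simp add: algebra_simps)
    also have "\<dots> \<le> real n * (b_fun t * ln 2 + hf (b_fun t))"
    proof -
      have "real m' / real n * ln 2 \<le> b_fun t * ln 2" using q by (intro mult_right_mono) auto
      moreover have "hf (real m' / real n) \<le> hf (b_fun t)" using hf_mono[OF _ q] m1 n0 by auto
      ultimately show ?thesis using n0 by (intro mult_left_mono add_mono) auto
    qed
    also have "\<dots> = ln T" using bf lnT by simp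
    finally have "ln (hl m') \<le> ln T" .
    moreover have "hl m' > 0" unfolding hl_def using B0 by simp
    ultimately show ?thesis using T1 by (simp add: ln_le_cancel_iff)
  qed
  hence P4: "(real n / real (n + l_fun n t)) powr (1 / p)
           \<le> (real n / (real n + of_int \<lfloor>b_fun t * real n\<rfloor>)) powr (1 / p)"
    unfolding mfl' using L(2) by (intro bmono) (use hl0 in blast)
  show ?thesis using P1 P2 P3 P4 by blast
qed

end
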